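(* Let $n,m,r\in\mathbb{N}$, let $\Theta:=\mathbb{R}^{n\times r}\times\mathbb{R}^{r\times m}$, and let $g:\Theta\to\mathbb{R}$ be differentiable, with partial gradients $\nabla_B g(B,A)\in\mathbb{R}^{n\times r}$ and $\nabla_A g(B,A)\in\mathbb{R}^{r\times m}$. Fix $\lambda\in[0,1]$, $k\in\mathbb{N}$ and initial matrices $B_0\in\mathbb{R}^{n\times r}$, $A_0\in\mathbb{R}^{r\times m}$. For a step size $\alpha>0$, define the LoRA gradient-descent iterates $B^{(\alpha)}_0=B_0$, $A^{(\alpha)}_0=A_0$ and, for every $i\ge 0$ and $j\in\{0,\dots,k-1\}$, $$B^{(\alpha)}_{ik+j+1}=B^{(\alpha)}_{ik+j}-\alpha\,\nabla_B g\big(B^{(\alpha)}_{ik+j},A^{(\alpha)}_{ik}\big),$$ $$A^{(\alpha)}_{ik+j+1}=A^{(\alpha)}_{ik+j}-\alpha\,\nabla_A g\big(\lambda B^{(\alpha)}_{ik}+(1-\lambda)B^{(\alpha)}_{(i+1)k},\,A^{(\alpha)}_{ik+j}\big).$$ Define their affine interpolations, for $t\ge 0$, with $N(t):=\lfloor t/\alpha\rfloor$ and $h(t):=N(t)-(N(t)\bmod k)$, $$Y_\alpha(t)=B^{(\alpha)}_{N(t)}-\big(t-N(t)\alpha\big)\nabla_B g\big(B^{(\alpha)}_{N(t)},A^{(\alpha)}_{h(t)}\big),$$ $$X_\alpha(t)=A^{(\alpha)}_{N(t)}-\big(t-N(t)\alpha\big)\nabla_A g\big(\lambda B^{(\alpha)}_{h(t)}+(1-\lambda)B^{(\alpha)}_{h(t)+k},\,A^{(\alpha)}_{N(t)}\big).$$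 Assume: (i) the iterates are uniformly bounded, i.e. there is a constant $C$ with $\|B^{(\alpha)}_\ell\|\le C$ and $\|A^{(\alpha)}_\ell\|\le C$ for all $\alpha$ and all $\ell$; (ii) $\nabla g$ is bounded on bounded subsets of $\Theta$; (iii) $\nabla g$ is Lipschitz on bounded subsets of $\Theta$: for every $R>0$ there is $L_R>0$ such that $\|\nabla g(B_2,A_2)-\nabla g(B_1,A_1)\|\le L_R\|(B_2,A_2)-(B_1,A_1)\|$ whenever $\max(\|B_1\|,\|A_1\|,\|B_2\|,\|A_2\|)\le R$. Then the initial value problem $$Y'(t)=-\nabla_Y g\big(Y(t),X(t)\big),\quad X'(t)=-\nabla_X g\big(Y(t),X(t)\big),\quad Y(0)=B_0,\ X(0)=A_0$$ has a solution $(Y,X)$ on $[0,\infty)$, and for every $t\ge 0$, $$\lim_{\alpha\to 0}\|Y_\alpha(t)-Y(t)\|=0,\qquad \lim_{\alpha\to 0}\|X_\alpha(t)-X(t)\|=0.$$ In particular this holds for every $\lambda\in[0,1]$ and $k\in\mathbb{N}$, so the gradient-flow limit does not depend on whether the updates are simultaneous ($\lambda=1$) or sequential ($\lambda=0$).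
   Context: $\|\cdot\|$ denotes the Frobenius norm. On $\Theta$ the norm is the product norm $\|(B,A)\|=\sqrt{\|B\|^2+\|A\|^2}$ and $\nabla g(B,A)=(\nabla_B g(B,A),\nabla_A g(B,A))$, where $\nabla_B g$ is the matrix with entries $\partial g/\partial b_{ij}$ (similarly for $A$). In LoRA one takes $g(B,A)=f(W_0+BA)$ for a pretrained matrix $W_0\in\mathbb{R}^{n\times m}$. *)

theory Defs
  imports "HOL-Analysis.Analysis"
begin

text \<open>Matrices in R^(n x r) are modelled as real^'r^'n (rows indexed by 'n);
  the HOL-Analysis norm on this type is the Frobenius norm, and on the product
  type it is sqrt(norm B^2 + norm A^2). The gradient G of g is a map
  Theta => Theta; fst (G p) is the partial gradient in B, snd (G p) in A.\<close>

text \<open>k inner steps on B with A frozen: B_{ik+j} from B_{ik}.\<close>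
definition lora_blockB ::
  "('b \<times> 'a \<Rightarrow> 'b \<times> 'a) \<Rightarrow> real \<Rightarrow> 'b::real_vector \<Rightarrow> 'a::real_vector \<Rightarrow> nat \<Rightarrow> 'b" where
  "lora_blockB G \<alpha> b a j = ((\<lambda>x. x - \<alpha> *\<^sub>R fst (G (x, a))) ^^ j) b"

definition lora_blockA ::
  "('b \<times> 'a \<Rightarrow> 'b \<times> 'a) \<Rightarrow> real \<Rightarrow> 'b::real_vector \<Rightarrow> 'a::real_vector \<Rightarrow> nat \<Rightarrow> 'a" where
  "lora_blockA G \<alpha> bmix a j = ((\<lambda>y. y - \<alpha> *\<^sub>R snd (G (bmix, y))) ^^ j) a"

text \<open>Iterates at the block starts ik, i = 0,1,2,...\<close>
fun lora_anchor ::
  "('b \<times> 'a \<Rightarrow> 'b \<times> 'a) \<Rightarrow> real \<Rightarrow> nat \<Rightarrow> real \<Rightarrow> 'b::real_vector \<Rightarrow> 'a::real_vector \<Rightarrow> nat \<Rightarrow> 'b \<times> 'a" where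
  "lora_anchor G lam k \<alpha> B0 A0 0 = (B0, A0)"
| "lora_anchor G lam k \<alpha> B0 A0 (Suc i) =
     (let (b, a) = lora_anchor G lam k \<alpha> B0 A0 i;
          bk = lora_blockB G \<alpha> b a k
      in (bk, lora_blockA G \<alpha> (lam *\<^sub>R b + (1 - lam) *\<^sub>R bk) a k))"

definition lora_iter ::
  "('b \<times> 'a \<Rightarrow> 'b \<times> 'a) \<Rightarrow> real \<Rightarrow> nat \<Rightarrow> real \<Rightarrow> 'b::real_vector \<Rightarrow> 'a::real_vector \<Rightarrow> nat \<Rightarrow> 'b \<times> 'a" where
  "lora_iter G lam k \<alpha> B0 A0 l =
     (let (b, a) = lora_anchor G lam k \<alpha> B0 A0 (l div k);
          bk = lora_blockB G \<alpha> b a k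
      in (lora_blockB G \<alpha> b a (l mod k),
          lora_blockA G \<alpha> (lam *\<^sub>R b + (1 - lam) *\<^sub>R bk) a (l mod k)))"

definition lora_N :: "real \<Rightarrow> real \<Rightarrow> nat" where
  "lora_N \<alpha> t = nat \<lfloor>t / \<alpha>\<rfloor>"

definition lora_Y ::
  "('b \<times> 'a \<Rightarrow> 'b \<times> 'a) \<Rightarrow> real \<Rightarrow> nat \<Rightarrow> real \<Rightarrow> 'b::real_vector \<Rightarrow> 'a::real_vector \<Rightarrow> real \<Rightarrow> 'b" where
  "lora_Y G lam k \<alpha> B0 A0 t =
     (let N = lora_N \<alpha> t; h = N - N mod k;
          it = lora_iter G lam k \<alpha> B0 A0
      in fst (it N) - (t - real N * \<alpha>) *\<^sub>R fst (G (fst (it N), snd (it h))))"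

definition lora_X ::
  "('b \<times> 'a \<Rightarrow> 'b \<times> 'a) \<Rightarrow> real \<Rightarrow> nat \<Rightarrow> real \<Rightarrow> 'b::real_vector \<Rightarrow> 'a::real_vector \<Rightarrow> real \<Rightarrow> 'a" where
  "lora_X G lam k \<alpha> B0 A0 t =
     (let N = lora_N \<alpha> t; h = N - N mod k;
          it = lora_iter G lam k \<alpha> B0 A0
      in snd (it N) - (t - real N * \<alpha>) *\<^sub>R
           snd (G (lam *\<^sub>R fst (it h) + (1 - lam) *\<^sub>R fst (it (h + k)), snd (it N))))"

end

theory Submission
  imports Defs
begin

lemma pw_bound:
  fixes u :: "real \<Rightarrow> 'a::euclidean_space" and D :: "nat \<Rightarrow> 'a"
  assumes al: "\<alpha> > 0"
    and piece: "\<And>N \<sigma>. real N * \<alpha> \<le> \<sigma> \<Longrightarrow> \<sigma> \<le> (real N + 1) * \<alpha> \<Longrightarrow>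
        u \<sigma> = u (real N * \<alpha>) - (\<sigma> - real N * \<alpha>) *\<^sub>R D N"
    and ab: "0 \<le> a" "a \<le> b"
    and bnd: "\<And>N. real N * \<alpha> \<le> b \<Longrightarrow> a \<le> (real N + 1) * \<alpha> \<Longrightarrow> norm (D N - w) \<le> E"
    and E: "E \<ge> 0"
  shows "norm (u b - u a + (b - a) *\<^sub>R w) \<le> E * (b - a)"
proof -
  define \<phi> where "\<phi> \<sigma> = u \<sigma> + \<sigma> *\<^sub>R w" for \<sigma>
  define nf where "nf x = nat \<lfloor>x / \<alpha>\<rfloor>" for x
  have nf: "real (nf x) * \<alpha> \<le> x" "x < (real (nf x) + 1) * \<alpha>" if "x \<ge> 0" for x
  proof -
    have "real (nf x) = of_int \<lfloor>x / \<alpha>\<rfloor>" using that al unfolding nf_def by simp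
    then show "real (nf x) * \<alpha> \<le> x" "x < (real (nf x) + 1) * \<alpha>"
      using al by (simp_all add: pos_le_divide_eq[symmetric] pos_divide_less_eq[symmetric])
  qed
  define S where "S = (\<lambda>j. real j * \<alpha>) ` {..nat \<lceil>b / \<alpha>\<rceil>}"
  have fS: "finite S" unfolding S_def by simp
  have cont: "continuous_on {a..b} u"
  proof -
    define U where "U j = {real j * \<alpha> .. (real j + 1) * \<alpha>}" for j
    have "continuous_on (\<Union>j\<in>{..nat \<lceil>b / \<alpha>\<rceil>}. U j) u"
    proof (rule continuous_on_closed_Union)
      fix j
      have "continuous_on (U j) (\<lambda>\<sigma>. u (real j * \<alpha>) - (\<sigma> - real j * \<alpha>) *\<^sub>R D j)"
        by (intro continuous_intros)
      then show "continuous_on (U j) u"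
        by (rule continuous_on_eq) (auto simp: U_def piece)
    qed (auto simp: U_def)
    moreover have "{a..b} \<subseteq> (\<Union>j\<in>{..nat \<lceil>b / \<alpha>\<rceil>}. U j)"
    proof
      fix x assume x: "x \<in> {a..b}"
      then have x0: "x \<ge> 0" using ab by auto
      have "x / \<alpha> \<le> b / \<alpha>" using x al by (simp add: divide_right_mono)
      then have "\<lfloor>x / \<alpha>\<rfloor> \<le> \<lceil>b / \<alpha>\<rceil>" by (metis floor_le_ceiling floor_mono order_trans)
      then have "nf x \<le> nat \<lceil>b / \<alpha>\<rceil>"
        unfolding nf_def by (intro nat_mono)
      then show "x \<in> (\<Union>j\<in>{..nat \<lceil>b / \<alpha>\<rceil>}. U j)"
        using nf[OF x0] by (auto simp: U_def intro!: bexI[of _ "nf x"])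
    qed
    ultimately show ?thesis by (rule continuous_on_subset)
  qed
  have der: "(\<phi> has_vector_derivative (w - D (nf x))) (at x)" if x: "x \<in> {a<..<b} - S" for x
  proof -
    have x0: "x \<ge> 0" using x ab by auto
    let ?N = "nf x"
    have "x / \<alpha> \<le> b / \<alpha>" using x al by (simp add: divide_right_mono)
    then have "\<lfloor>x / \<alpha>\<rfloor> \<le> \<lceil>b / \<alpha>\<rceil>" by (metis floor_le_ceiling floor_mono order_trans)
    then have "?N \<le> nat \<lceil>b / \<alpha>\<rceil>"
      unfolding nf_def by (intro nat_mono)
    then have "x \<noteq> real ?N * \<alpha>" using x unfolding S_def by auto
    then have lo: "real ?N * \<alpha> < x" using nf[OF x0] by auto
    let ?O = "{real ?N * \<alpha> <..< (real ?N + 1) * \<alpha>}"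
    have "((\<lambda>\<sigma>. u (real ?N * \<alpha>) - (\<sigma> - real ?N * \<alpha>) *\<^sub>R D ?N + \<sigma> *\<^sub>R w) has_vector_derivative
          (w - D ?N)) (at x)" (is "(?f has_vector_derivative _) _")
      by (auto intro!: derivative_eq_intros)
    moreover have "x \<in> ?O" using lo nf[OF x0] by simp
    moreover have "u (real ?N * \<alpha>) - (y - real ?N * \<alpha>) *\<^sub>R D ?N + y *\<^sub>R w = \<phi> y" if "y \<in> ?O" for y
    proof -
      have "u y = u (real ?N * \<alpha>) - (y - real ?N * \<alpha>) *\<^sub>R D ?N"
        using that by (intro piece) auto
      then show ?thesis unfolding \<phi>_def by simp
    qed
    ultimately show ?thesis
      using has_vector_derivative_transform_within_open[of ?f "w - D ?N" x ?O \<phi>] by simp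
  qed
  have "((\<lambda>x. w - D (nf x)) has_integral (\<phi> b - \<phi> a)) {a..b}"
  proof (rule fundamental_theorem_of_calculus_interior_strong[OF fS ab(2)])
    show "continuous_on {a..b} \<phi>" unfolding \<phi>_def by (intro continuous_intros cont)
  qed (rule der)
  then have "norm (\<phi> b - \<phi> a) \<le> E * measure lborel (cbox a b)"
  proof (intro has_integral_bound[OF E], simp)
    fix x assume x: "x \<in> cbox a b"
    then have x0: "x \<ge> 0" using ab by auto
    have "norm (D (nf x) - w) \<le> E"
      using nf[OF x0] x by (intro bnd) auto
    then show "norm (w - D (nf x)) \<le> E" by (simp add: norm_minus_commute)
  qed
  then show ?thesis using ab unfolding \<phi>_def by (simp add: algebra_simps)
qed

lemma le_lim_inv:
  fixes x y D :: real
  assumes "\<And>n::nat. n \<ge> 1 \<Longrightarrow> x \<le> y + D / real n"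
  shows "x \<le> y"
proof (rule ccontr)
  assume "\<not> x \<le> y"
  then have d: "x - y > 0" by simp
  obtain n :: nat where n: "D / (x - y) < real n" using reals_Archimedean2 by blast
  define m where "m = max n 1"
  have m1: "m \<ge> 1" and mn: "D / (x - y) < real m" using n unfolding m_def by auto
  have "D < real m * (x - y)" using mn d by (simp add: pos_divide_less_eq mult.commute)
  then have "D / real m < x - y" using m1 by (simp add: divide_less_eq mult.commute)
  with assms[OF m1] show False by simp
qed

lemma le_lim_alpha:
  fixes x y D :: real
  assumes "\<And>\<alpha>. 0 < \<alpha> \<Longrightarrow> \<alpha> \<le> 1 \<Longrightarrow> x \<le> y + D * \<alpha>"
  shows "x \<le> y"
proof (rule le_lim_inv[of x y D])
  fix n :: nat assume "n \<ge> 1"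
  then show "x \<le> y + D / real n" using assms[of "1 / real n"] by simp
qed

lemma stab:
  fixes u v :: "real \<Rightarrow> 'a::real_normed_vector" and F :: "'a \<Rightarrow> 'a"
  assumes lipF: "\<And>t. t \<ge> 0 \<Longrightarrow> norm (F (u t) - F (v t)) \<le> L * norm (u t - v t)"
    and L: "L \<ge> 0" and K: "K \<ge> 0" and a: "a \<ge> 0" and b: "b \<ge> 0"
    and cu: "\<And>t s. t \<ge> 0 \<Longrightarrow> s \<ge> 0 \<Longrightarrow> norm (u (t + s) - u t + s *\<^sub>R F (u t)) \<le> K * s * (s + a)"
    and cv: "\<And>t s. t \<ge> 0 \<Longrightarrow> s \<ge> 0 \<Longrightarrow> norm (v (t + s) - v t + s *\<^sub>R F (v t)) \<le> K * s * (s + b)"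
    and u0: "u 0 = v 0" and t: "t \<ge> 0"
  shows "norm (u t - v t) \<le> exp (L * t) * K * t * (a + b)"
proof (rule le_lim_inv[where D = "exp (L * t) * K * t * 2 * t"])
  fix n :: nat assume n: "n \<ge> 1"
  define s where "s = t / real n"
  define c where "c = K * s * (2 * s + a + b)"
  have s: "s \<ge> 0" unfolding s_def using t by simp
  have c: "c \<ge> 0" unfolding c_def using s K a b by simp
  have q: "1 \<le> 1 + L * s" using L s by simp
  have main: "norm (u (real i * s) - v (real i * s)) \<le> (1 + L * s) ^ i * (real i * c)" for i
  proof (induction i)
    case 0
    then show ?case using u0 by simp
  next
    case (Suc i)
    let ?x = "u (real i * s)" and ?y = "v (real i * s)"
    let ?x' = "u (real i * s + s)" and ?y' = "v (real i * s + s)"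
    have ti: "real i * s \<ge> 0" using s by simp
    have "?x' - ?y' = (?x' - ?x + s *\<^sub>R F ?x) - (?y' - ?y + s *\<^sub>R F ?y) + ((?x - ?y) - s *\<^sub>R (F ?x - F ?y))"
      by (simp add: algebra_simps)
    then have "norm (?x' - ?y') \<le> norm (?x' - ?x + s *\<^sub>R F ?x) + norm (?y' - ?y + s *\<^sub>R F ?y)
        + (norm (?x - ?y) + s * norm (F ?x - F ?y))"
    proof -
      have "norm ((?x - ?y) - s *\<^sub>R (F ?x - F ?y)) \<le> norm (?x - ?y) + s * norm (F ?x - F ?y)"
        using norm_triangle_ineq4[of "?x - ?y" "s *\<^sub>R (F ?x - F ?y)"] s by simp
      moreover have "norm ((?x' - ?x + s *\<^sub>R F ?x) - (?y' - ?y + s *\<^sub>R F ?y)) \<le>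
          norm (?x' - ?x + s *\<^sub>R F ?x) + norm (?y' - ?y + s *\<^sub>R F ?y)"
        by (rule norm_triangle_ineq4)
      ultimately show ?thesis using \<open>?x' - ?y' = _\<close> norm_triangle_ineq
        by (smt (verit, best))
    qed
    also have "\<dots> \<le> K * s * (s + a) + K * s * (s + b) + (norm (?x - ?y) + s * (L * norm (?x - ?y)))"
      using cu[OF ti s] cv[OF ti s] lipF[OF ti] s by (intro add_mono mult_left_mono) auto
    also have "\<dots> = (1 + L * s) * norm (?x - ?y) + c" unfolding c_def by (simp add: algebra_simps)
    also have "\<dots> \<le> (1 + L * s) * ((1 + L * s) ^ i * (real i * c)) + c"
      using Suc.IH q by (intro add_mono mult_left_mono) auto
    also have "\<dots> \<le> (1 + L * s) ^ Suc i * (real (Suc i) * c)"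
    proof -
      have "1 \<le> (1 + L * s) ^ Suc i" by (rule one_le_power[OF q])
      then have "c \<le> (1 + L * s) ^ Suc i * c" using c by (metis mult_left_mono mult_1 mult.commute)
      then show ?thesis by (simp add: algebra_simps)
    qed
    finally show ?case by (simp add: algebra_simps)
  qed
  have tn: "real n * s = t" unfolding s_def using n by simp
  have "(1 + L * s) ^ n \<le> exp (L * s) ^ n"
    using q by (intro power_mono) (auto simp: exp_ge_add_one_self)
  also have "\<dots> = exp (L * t)" using tn by (simp add: exp_of_nat_mult[symmetric] algebra_simps)
  finally have pe: "(1 + L * s) ^ n \<le> exp (L * t)" .
  have "norm (u t - v t) \<le> (1 + L * s) ^ n * (real n * c)" using main[of n] tn by simp
  also have "\<dots> \<le> exp (L * t) * (real n * c)" using pe c by (intro mult_right_mono) auto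
  also have "real n * c = K * t * (a + b) + K * t * 2 * t / real n"
    unfolding c_def s_def using n by (simp add: field_simps)
  finally show "norm (u t - v t) \<le> exp (L * t) * K * t * (a + b) + exp (L * t) * K * t * 2 * t / real n"
    by (simp add: algebra_simps)
qed

definition lD where
  "lD G lam k \<alpha> B0 A0 N = (let z = lora_iter G lam k \<alpha> B0 A0; h = N - N mod k in
     (fst (G (fst (z N), snd (z h))),
      snd (G (lam *\<^sub>R fst (z h) + (1 - lam) *\<^sub>R fst (z (h + k)), snd (z N)))))"

lemma Zf_eq: "(lora_Y G lam k \<alpha> B0 A0 t, lora_X G lam k \<alpha> B0 A0 t) =
   lora_iter G lam k \<alpha> B0 A0 (lora_N \<alpha> t) - (t - real (lora_N \<alpha> t) * \<alpha>) *\<^sub>R lD G lam k \<alpha> B0 A0 (lora_N \<alpha> t)"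
proof -
  have e: "n - n mod k + k = n + k - n mod k" for n :: nat
    using mod_less_eq_dividend[of n k] by linarith
  show ?thesis unfolding lora_Y_def lora_X_def lD_def Let_def prod_eq_iff
    by (simp only: fst_diff snd_diff fst_scaleR snd_scaleR fst_conv snd_conv)
qed

lemma blockB_Suc: "lora_blockB G \<alpha> b a (Suc j) = lora_blockB G \<alpha> b a j - \<alpha> *\<^sub>R fst (G (lora_blockB G \<alpha> b a j, a))"
  by (simp add: lora_blockB_def)

lemma blockA_Suc: "lora_blockA G \<alpha> b a (Suc j) = lora_blockA G \<alpha> b a j - \<alpha> *\<^sub>R snd (G (b, lora_blockA G \<alpha> b a j))"
  by (simp add: lora_blockA_def)

lemma iter_anchor:
  assumes "k \<ge> 1" "lora_anchor G lam k \<alpha> B0 A0 i = (b, a)"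
  shows "lora_iter G lam k \<alpha> B0 A0 (i * k) = (b, a)"
  using assms by (simp add: lora_iter_def lora_blockB_def lora_blockA_def)

lemma iter_split:
  assumes "k \<ge> 1" "lora_anchor G lam k \<alpha> B0 A0 (N div k) = (b, a)"
  shows "lora_iter G lam k \<alpha> B0 A0 N = (lora_blockB G \<alpha> b a (N mod k),
          lora_blockA G \<alpha> (lam *\<^sub>R b + (1 - lam) *\<^sub>R lora_blockB G \<alpha> b a k) a (N mod k))"
  using assms by (simp add: lora_iter_def)

lemma lora_step:
  assumes k: "k \<ge> 1"
  shows "lora_iter G lam k \<alpha> B0 A0 (Suc N) = lora_iter G lam k \<alpha> B0 A0 N - \<alpha> *\<^sub>R lD G lam k \<alpha> B0 A0 N"
proof -
  let ?z = "lora_iter G lam k \<alpha> B0 A0"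
  obtain b a where ba: "lora_anchor G lam k \<alpha> B0 A0 (N div k) = (b, a)" by (cases "lora_anchor G lam k \<alpha> B0 A0 (N div k)") auto
  define bk where "bk = lora_blockB G \<alpha> b a k"
  define mix where "mix = lam *\<^sub>R b + (1 - lam) *\<^sub>R bk"
  have an1: "lora_anchor G lam k \<alpha> B0 A0 (Suc (N div k)) = (bk, lora_blockA G \<alpha> mix a k)"
    using ba by (simp add: bk_def mix_def Let_def)
  have hN: "N - N mod k = (N div k) * k" by (simp add: minus_mod_eq_mult_div mult.commute)
  have zh: "?z (N - N mod k) = (b, a)" unfolding hN using iter_anchor[OF k ba] .
  have zhk: "?z (N - N mod k + k) = (bk, lora_blockA G \<alpha> mix a k)"
    unfolding hN using iter_anchor[OF k an1] by (simp add: algebra_simps)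
  have zN: "?z N = (lora_blockB G \<alpha> b a (N mod k), lora_blockA G \<alpha> mix a (N mod k))"
    using iter_split[OF k ba] by (simp add: bk_def mix_def)
  have D: "lD G lam k \<alpha> B0 A0 N = (fst (G (lora_blockB G \<alpha> b a (N mod k), a)),
                                    snd (G (mix, lora_blockA G \<alpha> mix a (N mod k))))"
    unfolding lD_def Let_def zh zhk zN by (simp add: mix_def)
  show ?thesis
  proof (cases "Suc (N mod k) = k")
    case True
    then have "Suc N div k = Suc (N div k)" "Suc N mod k = 0" using k by (simp_all add: div_Suc mod_Suc)
    then have "?z (Suc N) = (bk, lora_blockA G \<alpha> mix a k)"
      using iter_split[OF k, where N="Suc N"] an1 by (simp add: lora_blockB_def lora_blockA_def)
    then show ?thesis unfolding zN D using True
      by (metis bk_def blockA_Suc blockB_Suc fst_conv prod.collapse prod_eq_iff scaleR_Pair diff_Pair snd_conv)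
  next
    case False
    then have "Suc N div k = N div k" "Suc N mod k = Suc (N mod k)" using k by (simp_all add: div_Suc mod_Suc)
    then have "?z (Suc N) = (lora_blockB G \<alpha> b a (Suc (N mod k)), lora_blockA G \<alpha> mix a (Suc (N mod k)))"
      using iter_split[OF k, where N="Suc N"] ba by (simp add: bk_def mix_def)
    then show ?thesis unfolding zN D by (simp add: blockA_Suc blockB_Suc)
  qed
qed

lemma tri4:
  fixes a b c d :: "'a::real_normed_vector"
  shows "norm (a + b + c + s *\<^sub>R d) \<le> norm a + norm b + norm c + \<bar>s\<bar> * norm d"
proof -
  have h1: "norm (a + b + c + s *\<^sub>R d) \<le> norm (a + b + c) + norm (s *\<^sub>R d)" by (rule norm_triangle_ineq)
  have h2: "norm (a + b + c) \<le> norm (a + b) + norm c" by (rule norm_triangle_ineq)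
  have h3: "norm (a + b) \<le> norm a + norm b" by (rule norm_triangle_ineq)
  show ?thesis using h1 h2 h3 norm_scaleR[of s d] by linarith
qed

lemma norm_fst_le': "norm (fst p) \<le> norm p"
  using norm_fst_le[of "fst p" "snd p"] by simp

lemma norm_snd_le': "norm (snd p) \<le> norm p"
  using norm_snd_le[of "snd p" "fst p"] by simp

theorem theorem2p4:
  fixes g :: "(real^'r^'n) \<times> (real^'m^'r) \<Rightarrow> real"
    and G :: "(real^'r^'n) \<times> (real^'m^'r) \<Rightarrow> (real^'r^'n) \<times> (real^'m^'r)"
    and lam :: real and k :: nat
    and B0 :: "real^'r^'n" and A0 :: "real^'m^'r"
  assumes grad: "\<And>p. (g has_derivative (\<lambda>h. G p \<bullet> h)) (at p)"
    and lam: "0 \<le> lam" "lam \<le> 1"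
    and k: "k \<ge> 1"
    and unif_bdd: "\<exists>C. \<forall>\<alpha>>0. \<forall>l.
         norm (fst (lora_iter G lam k \<alpha> B0 A0 l)) \<le> C \<and>
         norm (snd (lora_iter G lam k \<alpha> B0 A0 l)) \<le> C"
    and grad_bdd: "\<And>S. bounded S \<Longrightarrow> bounded (G ` S)"
    and grad_lip: "\<And>R. R > 0 \<Longrightarrow> \<exists>L>0. \<forall>B1 A1 B2 A2.
         max (max (norm B1) (norm A1)) (max (norm B2) (norm A2)) \<le> R \<longrightarrow>
         norm (G (B2, A2) - G (B1, A1)) \<le> L * norm ((B2, A2) - (B1, A1))"
  shows "\<exists>Y X. Y 0 = B0 \<and> X 0 = A0 \<and>
     (\<forall>t\<ge>0. (Y has_vector_derivative - fst (G (Y t, X t))) (at t within {0..}) \<and>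
             (X has_vector_derivative - snd (G (Y t, X t))) (at t within {0..})) \<and>
     (\<forall>t\<ge>0. ((\<lambda>\<alpha>. norm (lora_Y G lam k \<alpha> B0 A0 t - Y t)) \<longlongrightarrow> 0) (at_right 0) \<and>
             ((\<lambda>\<alpha>. norm (lora_X G lam k \<alpha> B0 A0 t - X t)) \<longlongrightarrow> 0) (at_right 0))"
proof -
  define z where "z \<alpha> = lora_iter G lam k \<alpha> B0 A0" for \<alpha>
  define D where "D \<alpha> = lD G lam k \<alpha> B0 A0" for \<alpha>
  define Zf where "Zf \<alpha> t = (lora_Y G lam k \<alpha> B0 A0 t, lora_X G lam k \<alpha> B0 A0 t)" for \<alpha> t
  define P1 where "P1 \<alpha> N = (fst (z \<alpha> N), snd (z \<alpha> (N - N mod k)))" for \<alpha> N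
  define P2 where "P2 \<alpha> N = (lam *\<^sub>R fst (z \<alpha> (N - N mod k)) + (1 - lam) *\<^sub>R fst (z \<alpha> (N - N mod k + k)),
     snd (z \<alpha> N))" for \<alpha> N
  have DP: "D \<alpha> N = (fst (G (P1 \<alpha> N)), snd (G (P2 \<alpha> N)))" for \<alpha> N
    unfolding D_def lD_def P1_def P2_def z_def Let_def by simp
  have step: "z \<alpha> (Suc N) = z \<alpha> N - \<alpha> *\<^sub>R D \<alpha> N" for \<alpha> N
    unfolding z_def D_def by (rule lora_step[OF k])
  have Zform: "Zf \<alpha> t = z \<alpha> (lora_N \<alpha> t) - (t - real (lora_N \<alpha> t) * \<alpha>) *\<^sub>R D \<alpha> (lora_N \<alpha> t)" for \<alpha> t
    unfolding Zf_def z_def D_def by (rule Zf_eq)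
  obtain C where C: "\<And>\<alpha> l. \<alpha> > 0 \<Longrightarrow> norm (fst (z \<alpha> l)) \<le> C \<and> norm (snd (z \<alpha> l)) \<le> C"
    using unif_bdd unfolding z_def by blast
  have C0: "C \<ge> 0" using C[of 1 0] norm_ge_zero[of "fst (z 1 0)"] by linarith
  define S0 where "S0 = {p :: (real^'r^'n) \<times> (real^'m^'r). norm (fst p) \<le> C \<and> norm (snd p) \<le> C}"
  have "bounded S0"
    unfolding bounded_iff S0_def
  proof (intro exI[of _ "2 * C"] ballI)
    fix p :: "(real^'r^'n) \<times> (real^'m^'r)" assume "p \<in> {p. norm (fst p) \<le> C \<and> norm (snd p) \<le> C}"
    then show "norm p \<le> 2 * C" using norm_Pair_le[of "fst p" "snd p"] by simp
  qed
  then obtain M where M0: "M > 0" and M: "\<And>p. p \<in> S0 \<Longrightarrow> norm (G p) \<le> M"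
    using grad_bdd bounded_pos by (metis image_eqI)
  define R where "R = C + M + 1"
  have R0: "R > 0" unfolding R_def using C0 M0 by simp
  obtain L where L0: "L > 0" and Lip: "\<forall>B1 A1 B2 A2.
         max (max (norm B1) (norm A1)) (max (norm B2) (norm A2)) \<le> R \<longrightarrow>
         norm (G (B2, A2) - G (B1, A1)) \<le> L * norm ((B2, A2) - (B1, A1))"
    using grad_lip[OF R0] by blast
  define SR where "SR = {p :: (real^'r^'n) \<times> (real^'m^'r). norm (fst p) \<le> R \<and> norm (snd p) \<le> R}"
  have lipG: "norm (G q - G p) \<le> L * norm (q - p)" if "p \<in> SR" "q \<in> SR" for p q
    using Lip[rule_format, of "fst p" "snd p" "fst q" "snd q"] that unfolding SR_def by simp
  have S0R: "p \<in> S0 \<Longrightarrow> p \<in> SR" for p unfolding S0_def SR_def R_def using M0 by auto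
  have zS0: "\<alpha> > 0 \<Longrightarrow> z \<alpha> l \<in> S0" for \<alpha> l using C unfolding S0_def by auto
  have P1S0: "\<alpha> > 0 \<Longrightarrow> P1 \<alpha> N \<in> S0" for \<alpha> N using C unfolding S0_def P1_def by auto
  have P2S0: "\<alpha> > 0 \<Longrightarrow> P2 \<alpha> N \<in> S0" for \<alpha> N
  proof -
    assume a: "\<alpha> > 0"
    let ?x = "fst (z \<alpha> (N - N mod k))" and ?y = "fst (z \<alpha> (N - N mod k + k))"
    have "norm (lam *\<^sub>R ?x + (1 - lam) *\<^sub>R ?y) \<le> lam * norm ?x + (1 - lam) * norm ?y"
      using norm_triangle_ineq[of "lam *\<^sub>R ?x" "(1 - lam) *\<^sub>R ?y"] lam by simp
    also have "\<dots> \<le> lam * C + (1 - lam) * C"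
      using C[OF a] lam by (intro add_mono mult_left_mono) auto
    finally show ?thesis using C[OF a] unfolding S0_def P2_def by (simp add: algebra_simps)
  qed
  have Dc: "norm (fst (D \<alpha> N)) \<le> M \<and> norm (snd (D \<alpha> N)) \<le> M" if "\<alpha> > 0" for \<alpha> N
  proof -
    have "norm (fst (G (P1 \<alpha> N))) \<le> norm (G (P1 \<alpha> N))"
      using norm_fst_le[of "fst (G (P1 \<alpha> N))" "snd (G (P1 \<alpha> N))"] by simp
    moreover have "norm (snd (G (P2 \<alpha> N))) \<le> norm (G (P2 \<alpha> N))"
      using norm_snd_le[of "snd (G (P2 \<alpha> N))" "fst (G (P2 \<alpha> N))"] by simp
    ultimately show ?thesis unfolding DP using M[OF P1S0[OF that, of N]] M[OF P2S0[OF that, of N]] by simp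
  qed
  have Dn: "norm (D \<alpha> N) \<le> 2 * M" if "\<alpha> > 0" for \<alpha> N
    using norm_Pair_le[of "fst (D \<alpha> N)" "snd (D \<alpha> N)"] Dc[OF that, of N] by simp
  have drift: "norm (z \<alpha> l2 - z \<alpha> l1) \<le> real (l2 - l1) * \<alpha> * (2 * M)" if a: "\<alpha> > 0" and l: "l1 \<le> l2" for \<alpha> l1 l2
    using l
  proof (induction l2 rule: dec_induct)
    case base
    then show ?case by simp
  next
    case (step l)
    have "norm (z \<alpha> (Suc l) - z \<alpha> l1) = norm ((z \<alpha> l - z \<alpha> l1) - \<alpha> *\<^sub>R D \<alpha> l)"
      using step.hyps by (simp add: \<open>\<And>\<alpha> N. z \<alpha> (Suc N) = z \<alpha> N - \<alpha> *\<^sub>R D \<alpha> N\<close> algebra_simps)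
    also have "\<dots> \<le> norm (z \<alpha> l - z \<alpha> l1) + \<alpha> * norm (D \<alpha> l)"
      using norm_triangle_ineq4[of "z \<alpha> l - z \<alpha> l1" "\<alpha> *\<^sub>R D \<alpha> l"] a by simp
    also have "\<dots> \<le> real (l - l1) * \<alpha> * (2 * M) + \<alpha> * (2 * M)"
      using step.IH Dn[OF a, of l] a by (intro add_mono mult_left_mono) auto
    also have "\<dots> = real (Suc l - l1) * \<alpha> * (2 * M)"
      using step.hyps by (simp add: Suc_diff_le algebra_simps)
    finally show ?case .
  qed
  have P1d: "norm (P1 \<alpha> N - z \<alpha> N) \<le> real k * \<alpha> * (2 * M)" if a: "\<alpha> > 0" for \<alpha> N
  proof -
    let ?h = "N - N mod k"
    have "P1 \<alpha> N - z \<alpha> N = (0, snd (z \<alpha> ?h - z \<alpha> N))" by (simp add: P1_def prod_eq_iff)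
    then have "norm (P1 \<alpha> N - z \<alpha> N) = norm (snd (z \<alpha> ?h - z \<alpha> N))" by (simp add: norm_Pair)
    also have "\<dots> \<le> norm (z \<alpha> ?h - z \<alpha> N)"
      by (rule norm_snd_le')
    also have "\<dots> = norm (z \<alpha> N - z \<alpha> ?h)" by (rule norm_minus_commute)
    also have "\<dots> \<le> real (N - ?h) * \<alpha> * (2 * M)" by (rule drift[OF a]) simp
    also have "\<dots> \<le> real k * \<alpha> * (2 * M)"
    proof -
      have "N - ?h = N mod k" by (simp add: mod_less_eq_dividend)
      then have "N - ?h \<le> k" using k by (simp add: less_imp_le)
      then show ?thesis using a M0 by (intro mult_right_mono) auto
    qed
    finally show ?thesis .
  qed
  have P2d: "norm (P2 \<alpha> N - z \<alpha> N) \<le> real k * \<alpha> * (2 * M)" if a: "\<alpha> > 0" for \<alpha> N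
  proof -
    let ?h = "N - N mod k"
    let ?u = "z \<alpha> ?h - z \<alpha> N" and ?v = "z \<alpha> (?h + k) - z \<alpha> N"
    have "P2 \<alpha> N - z \<alpha> N = (lam *\<^sub>R fst ?u + (1 - lam) *\<^sub>R fst ?v, 0)"
      by (simp add: P2_def prod_eq_iff algebra_simps)
    then have "norm (P2 \<alpha> N - z \<alpha> N) = norm (lam *\<^sub>R fst ?u + (1 - lam) *\<^sub>R fst ?v)" by (simp add: norm_Pair)
    also have "\<dots> \<le> lam * norm (fst ?u) + (1 - lam) * norm (fst ?v)"
      using norm_triangle_ineq[of "lam *\<^sub>R fst ?u" "(1 - lam) *\<^sub>R fst ?v"] lam by simp
    also have "\<dots> \<le> lam * norm ?u + (1 - lam) * norm ?v"
      using norm_fst_le'[of ?u] norm_fst_le'[of ?v] lam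
      by (intro add_mono mult_left_mono) auto
    also have "\<dots> \<le> lam * (real k * \<alpha> * (2 * M)) + (1 - lam) * (real k * \<alpha> * (2 * M))"
    proof (intro add_mono mult_left_mono)
      have "N - ?h = N mod k" by (simp add: mod_less_eq_dividend)
      then have "N - ?h \<le> k" using k by (simp add: less_imp_le)
      then have "real (N - ?h) * \<alpha> * (2 * M) \<le> real k * \<alpha> * (2 * M)" using a M0 by (intro mult_right_mono) auto
      moreover have "norm (z \<alpha> N - z \<alpha> ?h) \<le> real (N - ?h) * \<alpha> * (2 * M)" by (rule drift[OF a]) simp
      ultimately have "norm (z \<alpha> N - z \<alpha> ?h) \<le> real k * \<alpha> * (2 * M)" by (rule order_trans[rotated])
      then show "norm ?u \<le> real k * \<alpha> * (2 * M)" by (simp add: norm_minus_commute)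
      have "?h + k - N \<le> k" by simp
      then have "real (?h + k - N) * \<alpha> * (2 * M) \<le> real k * \<alpha> * (2 * M)" using a M0 by (intro mult_right_mono) auto
      moreover have "N \<le> ?h + k" using mod_less_divisor[of k N] k by linarith
      then have "norm ?v \<le> real (?h + k - N) * \<alpha> * (2 * M)" by (rule drift[OF a])
      ultimately show "norm ?v \<le> real k * \<alpha> * (2 * M)" by (rule order_trans[rotated])
    qed (use lam in auto)
    also have "\<dots> = real k * \<alpha> * (2 * M)" by (simp add: algebra_simps)
    finally show ?thesis .
  qed
  have lN: "real (lora_N \<alpha> t) * \<alpha> \<le> t \<and> t < (real (lora_N \<alpha> t) + 1) * \<alpha>" if "t \<ge> 0" "\<alpha> > 0" for t \<alpha>
  proof -
    have "real (lora_N \<alpha> t) = of_int \<lfloor>t / \<alpha>\<rfloor>" using that unfolding lora_N_def by simp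
    then show ?thesis
      using that by (simp add: pos_le_divide_eq[symmetric] pos_divide_less_eq[symmetric])
  qed
  have lNeq: "lora_N \<alpha> \<sigma> = N" if "\<alpha> > 0" "real N * \<alpha> \<le> \<sigma>" "\<sigma> < (real N + 1) * \<alpha>" for \<alpha> \<sigma> N
  proof -
    have "\<lfloor>\<sigma> / \<alpha>\<rfloor> = int N"
      using that by (simp add: floor_eq_iff pos_le_divide_eq pos_divide_less_eq)
    then show ?thesis unfolding lora_N_def by simp
  qed
  have ZN: "Zf \<alpha> (real N * \<alpha>) = z \<alpha> N" if "\<alpha> > 0" for \<alpha> N
    using Zform[of \<alpha> "real N * \<alpha>"] lNeq[OF that, of N "real N * \<alpha>"] that by simp
  have piece: "Zf \<alpha> \<sigma> = Zf \<alpha> (real N * \<alpha>) - (\<sigma> - real N * \<alpha>) *\<^sub>R D \<alpha> N"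
    if a: "\<alpha> > 0" and s: "real N * \<alpha> \<le> \<sigma>" "\<sigma> \<le> (real N + 1) * \<alpha>" for \<alpha> \<sigma> N
  proof (cases "\<sigma> < (real N + 1) * \<alpha>")
    case True
    then show ?thesis using Zform[of \<alpha> \<sigma>] lNeq[OF a s(1) True] ZN[OF a] by simp
  next
    case False
    then have "\<sigma> = real (Suc N) * \<alpha>" using s by (simp add: algebra_simps)
    then have "Zf \<alpha> \<sigma> = z \<alpha> (Suc N)" using ZN[OF a, of "Suc N"] by simp
    then show ?thesis using step ZN[OF a] \<open>\<sigma> = real (Suc N) * \<alpha>\<close> by (simp add: algebra_simps)
  qed
  have ZS: "Zf \<alpha> t \<in> SR" if a: "\<alpha> > 0" "\<alpha> \<le> 1" and t: "t \<ge> 0" for \<alpha> t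
  proof -
    let ?N = "lora_N \<alpha> t"
    define \<tau> where "\<tau> = t - real ?N * \<alpha>"
    have \<tau>: "0 \<le> \<tau>" "\<tau> \<le> 1" using lN[OF t a(1)] a unfolding \<tau>_def by (auto simp: algebra_simps)
    have "norm (fst (Zf \<alpha> t)) \<le> norm (fst (z \<alpha> ?N)) + \<tau> * norm (fst (D \<alpha> ?N))"
      unfolding Zform \<tau>_def[symmetric] using norm_triangle_ineq4[of "fst (z \<alpha> ?N)" "\<tau> *\<^sub>R fst (D \<alpha> ?N)"] \<tau> by simp
    also have "\<dots> \<le> C + 1 * M" using C[OF a(1)] Dc[OF a(1)] \<tau> M0 by (intro add_mono mult_mono) auto
    finally have 1: "norm (fst (Zf \<alpha> t)) \<le> R" unfolding R_def by simp
    have "norm (snd (Zf \<alpha> t)) \<le> norm (snd (z \<alpha> ?N)) + \<tau> * norm (snd (D \<alpha> ?N))"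
      unfolding Zform \<tau>_def[symmetric] using norm_triangle_ineq4[of "snd (z \<alpha> ?N)" "\<tau> *\<^sub>R snd (D \<alpha> ?N)"] \<tau> by simp
    also have "\<dots> \<le> C + 1 * M" using C[OF a(1)] Dc[OF a(1)] \<tau> M0 by (intro add_mono mult_mono) auto
    finally have 2: "norm (snd (Zf \<alpha> t)) \<le> R" unfolding R_def by simp
    show ?thesis using 1 2 unfolding SR_def by simp
  qed
  have Zlip: "norm (Zf \<alpha> b - Zf \<alpha> a) \<le> 2 * M * (b - a)" if al: "\<alpha> > 0" and ab: "0 \<le> a" "a \<le> b" for \<alpha> a b
  proof -
    have "norm (Zf \<alpha> b - Zf \<alpha> a + (b - a) *\<^sub>R 0) \<le> 2 * M * (b - a)"
      by (rule pw_bound[OF al piece[OF al] ab]) (use Dn[OF al] M0 in auto)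
    then show ?thesis by simp
  qed
  define K where "K = 4 * L * M * (real k + 1)"
  have K0: "K \<ge> 0" unfolding K_def using L0 M0 by simp
  have Zcons: "norm (Zf \<alpha> (t + s) - Zf \<alpha> t + s *\<^sub>R G (Zf \<alpha> t)) \<le> K * s * (s + \<alpha>)"
    if a: "\<alpha> > 0" "\<alpha> \<le> 1" and ts: "t \<ge> 0" "s \<ge> 0" for \<alpha> t s
  proof -
    define E where "E = 4 * L * M * (real k * \<alpha> + s + \<alpha>)"
    have E0: "E \<ge> 0" unfolding E_def using L0 M0 a ts by simp
    have ZtS: "Zf \<alpha> t \<in> SR" by (rule ZS[OF a ts(1)])
    have bnd: "norm (D \<alpha> N - G (Zf \<alpha> t)) \<le> E" if N: "real N * \<alpha> \<le> t + s" "t \<le> (real N + 1) * \<alpha>" for N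
    proof -
      have zt: "norm (z \<alpha> N - Zf \<alpha> t) \<le> 2 * M * (s + \<alpha>)"
      proof (cases "real N * \<alpha> \<le> t")
        case True
        have "norm (Zf \<alpha> t - Zf \<alpha> (real N * \<alpha>)) \<le> 2 * M * (t - real N * \<alpha>)"
          using Zlip[OF a(1)] a True by simp
        also have "\<dots> \<le> 2 * M * (s + \<alpha>)" using N ts M0 by (intro mult_left_mono) (auto simp: algebra_simps)
        finally show ?thesis using ZN[OF a(1), of N] by (simp add: norm_minus_commute)
      next
        case False
        then have "norm (Zf \<alpha> (real N * \<alpha>) - Zf \<alpha> t) \<le> 2 * M * (real N * \<alpha> - t)"
          using Zlip[OF a(1) ts(1)] by simp
        also have "\<dots> \<le> 2 * M * (s + \<alpha>)" using N ts M0 a by (intro mult_left_mono) auto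
        finally show ?thesis using ZN[OF a(1), of N] by simp
      qed
      have e1: "norm (P1 \<alpha> N - Zf \<alpha> t) \<le> real k * \<alpha> * (2 * M) + 2 * M * (s + \<alpha>)"
        by (rule norm_diff_triangle_le[OF P1d[OF a(1)] zt])
      have e2: "norm (P2 \<alpha> N - Zf \<alpha> t) \<le> real k * \<alpha> * (2 * M) + 2 * M * (s + \<alpha>)"
        by (rule norm_diff_triangle_le[OF P2d[OF a(1)] zt])
      have "D \<alpha> N - G (Zf \<alpha> t) = (fst (G (P1 \<alpha> N) - G (Zf \<alpha> t)), snd (G (P2 \<alpha> N) - G (Zf \<alpha> t)))"
        by (simp add: DP prod_eq_iff)
      then have "norm (D \<alpha> N - G (Zf \<alpha> t)) \<le> norm (fst (G (P1 \<alpha> N) - G (Zf \<alpha> t))) + norm (snd (G (P2 \<alpha> N) - G (Zf \<alpha> t)))"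
        by (metis norm_Pair_le)
      also have "\<dots> \<le> norm (G (P1 \<alpha> N) - G (Zf \<alpha> t)) + norm (G (P2 \<alpha> N) - G (Zf \<alpha> t))"
        by (intro add_mono norm_fst_le' norm_snd_le')
      also have "\<dots> \<le> L * norm (P1 \<alpha> N - Zf \<alpha> t) + L * norm (P2 \<alpha> N - Zf \<alpha> t)"
        by (intro add_mono lipG ZtS S0R P1S0 P2S0 a)
      also have "\<dots> \<le> L * (real k * \<alpha> * (2 * M) + 2 * M * (s + \<alpha>)) + L * (real k * \<alpha> * (2 * M) + 2 * M * (s + \<alpha>))"
        using e1 e2 L0 by (intro add_mono mult_left_mono) auto
      also have "\<dots> = E" unfolding E_def by (simp add: algebra_simps)
      finally show ?thesis .
    qed
    have "norm (Zf \<alpha> (t + s) - Zf \<alpha> t + ((t + s) - t) *\<^sub>R G (Zf \<alpha> t)) \<le> E * ((t + s) - t)"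
      by (rule pw_bound[OF a(1) piece[OF a(1)]]) (use ts bnd E0 in auto)
    then have "norm (Zf \<alpha> (t + s) - Zf \<alpha> t + s *\<^sub>R G (Zf \<alpha> t)) \<le> E * s" by simp
    also have "E * s \<le> K * s * (s + \<alpha>)"
    proof -
      have "0 \<le> real k * s" using ts by simp
      then have "real k * \<alpha> + s + \<alpha> \<le> (real k + 1) * (s + \<alpha>)" by (simp add: algebra_simps)
      moreover have "0 \<le> 4 * L * M * s" using L0 M0 ts by simp
      ultimately have ineq: "4 * L * M * s * (real k * \<alpha> + s + \<alpha>) \<le> 4 * L * M * s * ((real k + 1) * (s + \<alpha>))"
        by (rule mult_left_mono)
      have eq1: "E * s = 4 * L * M * s * (real k * \<alpha> + s + \<alpha>)" unfolding E_def by (simp add: algebra_simps)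
      have eq2: "K * s * (s + \<alpha>) = 4 * L * M * s * ((real k + 1) * (s + \<alpha>))" unfolding K_def by (simp add: algebra_simps)
      show ?thesis unfolding eq1 eq2 by (rule ineq)
    qed
    finally show ?thesis .
  qed
  define ct where "ct t = exp (L * t) * K * t" for t
  have ct0: "ct t \<ge> 0" if "t \<ge> 0" for t unfolding ct_def using K0 that by simp
  have Z00: "Zf \<alpha> 0 = (B0, A0)" if "\<alpha> > 0" for \<alpha>
    using ZN[OF that, of 0] by (simp add: z_def lora_iter_def lora_blockB_def lora_blockA_def)
  have cmp: "norm (Zf \<alpha> t - Zf \<beta> t) \<le> ct t * (\<alpha> + \<beta>)"
    if a: "\<alpha> > 0" "\<alpha> \<le> 1" and b: "\<beta> > 0" "\<beta> \<le> 1" and t: "t \<ge> 0" for \<alpha> \<beta> t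
  proof -
    have "norm (Zf \<alpha> t - Zf \<beta> t) \<le> exp (L * t) * K * t * (\<alpha> + \<beta>)"
    proof (rule stab[where u = "Zf \<alpha>" and v = "Zf \<beta>" and F = G and L = L and K = K and a = \<alpha> and b = \<beta> and t = t])
      show "norm (G (Zf \<alpha> t') - G (Zf \<beta> t')) \<le> L * norm (Zf \<alpha> t' - Zf \<beta> t')" if "t' \<ge> 0" for t'
        using lipG[OF ZS[OF b that] ZS[OF a that]] .
    qed (use L0 K0 a b t Zcons[OF a] Zcons[OF b] Z00[OF a(1)] Z00[OF b(1)] in auto)
    then show ?thesis by (simp add: ct_def)
  qed
  define Xs where "Xs n t = Zf (inverse (real (Suc n))) t" for n t
  have inv: "0 < inverse (real (Suc n))" "inverse (real (Suc n)) \<le> 1" for n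
    by (auto simp: field_simps)
  have conv: "convergent (\<lambda>n. Xs n t)" if t: "t \<ge> 0" for t
  proof -
    have "Cauchy (\<lambda>n. Xs n t)"
    proof (rule CauchyI)
      fix e :: real assume e: "e > 0"
      obtain N :: nat where N: "2 * (ct t + 1) / e < real N" using reals_Archimedean2 by blast
      show "\<exists>N. \<forall>m\<ge>N. \<forall>n\<ge>N. norm (Xs m t - Xs n t) < e"
      proof (intro exI[of _ N] allI impI)
        fix m n assume mn: "N \<le> m" "N \<le> n"
        have im: "inverse (real (Suc m)) \<le> inverse (real (Suc N))" using mn by (simp add: le_imp_inverse_le)
        have iN: "inverse (real (Suc n)) \<le> inverse (real (Suc N))" using mn by (simp add: le_imp_inverse_le)
        have "norm (Xs m t - Xs n t) \<le> ct t * (inverse (real (Suc m)) + inverse (real (Suc n)))"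
          unfolding Xs_def by (rule cmp[OF inv inv t])
        also have "\<dots> \<le> ct t * (2 * inverse (real (Suc N)))"
        proof (rule mult_left_mono)
          show "inverse (real (Suc m)) + inverse (real (Suc n)) \<le> 2 * inverse (real (Suc N))"
            using im iN by linarith
        qed (rule ct0[OF t])
        also have "\<dots> < e"
        proof -
          have "2 * (ct t + 1) < e * real N" using N e by (simp add: pos_divide_less_eq mult.commute)
          then have "2 * ct t < e * real (Suc N)" using e by (simp add: algebra_simps)
          then show ?thesis by (simp add: field_simps)
        qed
        finally show "norm (Xs m t - Xs n t) < e" .
      qed
    qed
    then show ?thesis by (simp add: Cauchy_convergent_iff)
  qed
  define Z where "Z t = lim (\<lambda>n. Xs n t)" for t
  have XZ: "(\<lambda>n. Xs n t) \<longlonglongrightarrow> Z t" if "t \<ge> 0" for t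
    using conv[OF that] unfolding Z_def by (simp add: convergent_LIMSEQ_iff)
  have ZA: "norm (Zf \<alpha> t - Z t) \<le> ct t * \<alpha>" if a: "\<alpha> > 0" "\<alpha> \<le> 1" and t: "t \<ge> 0" for \<alpha> t
  proof (rule LIMSEQ_le)
    show "(\<lambda>n. norm (Zf \<alpha> t - Xs n t)) \<longlonglongrightarrow> norm (Zf \<alpha> t - Z t)" by (intro tendsto_intros XZ[OF t])
    have "(\<lambda>n. ct t * (\<alpha> + inverse (real (Suc n)))) \<longlonglongrightarrow> ct t * (\<alpha> + 0)"
      by (intro tendsto_intros LIMSEQ_inverse_real_of_nat)
    then show "(\<lambda>n. ct t * (\<alpha> + inverse (real (Suc n)))) \<longlonglongrightarrow> ct t * \<alpha>" by simp
    show "\<exists>N. \<forall>n\<ge>N. norm (Zf \<alpha> t - Xs n t) \<le> ct t * (\<alpha> + inverse (real (Suc n)))"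
      unfolding Xs_def using cmp[OF a inv t] by auto
  qed
  have Z0: "Z 0 = (B0, A0)"
  proof -
    have "norm (Zf 1 0 - Z 0) \<le> ct 0 * 1" using ZA[of 1 0] by simp
    then have "Zf 1 0 = Z 0" by (simp add: ct_def)
    then show ?thesis using Z00[of 1] by simp
  qed
  have ZA': "norm (Z t - Zf \<alpha> t) \<le> ct t * \<alpha>" if a: "\<alpha> > 0" "\<alpha> \<le> 1" and t: "t \<ge> 0" for \<alpha> t
    using ZA[OF a t] norm_minus_commute[of "Z t" "Zf \<alpha> t"] by simp
  have ZSR: "Z t \<in> SR" if t: "t \<ge> 0" for t
  proof -
    have 1: "norm (fst (Z t)) \<le> R"
    proof (rule le_lim_alpha[where D = "ct t"])
      fix \<alpha> :: real assume a: "0 < \<alpha>" "\<alpha> \<le> 1"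
      have h1: "norm (fst (Z t)) \<le> norm (fst (Zf \<alpha> t)) + norm (fst (Z t) - fst (Zf \<alpha> t))" by (rule norm_triangle_sub)
      have h2: "norm (fst (Z t) - fst (Zf \<alpha> t)) \<le> norm (Z t - Zf \<alpha> t)" using norm_fst_le'[of "Z t - Zf \<alpha> t"] by simp
      have h3: "norm (fst (Zf \<alpha> t)) \<le> R" using ZS[OF a t] unfolding SR_def by simp
      show "norm (fst (Z t)) \<le> R + ct t * \<alpha>" using h1 h2 h3 ZA'[OF a t] by linarith
    qed
    have 2: "norm (snd (Z t)) \<le> R"
    proof (rule le_lim_alpha[where D = "ct t"])
      fix \<alpha> :: real assume a: "0 < \<alpha>" "\<alpha> \<le> 1"
      have h1: "norm (snd (Z t)) \<le> norm (snd (Zf \<alpha> t)) + norm (snd (Z t) - snd (Zf \<alpha> t))" by (rule norm_triangle_sub)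
      have h2: "norm (snd (Z t) - snd (Zf \<alpha> t)) \<le> norm (Z t - Zf \<alpha> t)" using norm_snd_le'[of "Z t - Zf \<alpha> t"] by simp
      have h3: "norm (snd (Zf \<alpha> t)) \<le> R" using ZS[OF a t] unfolding SR_def by simp
      show "norm (snd (Z t)) \<le> R + ct t * \<alpha>" using h1 h2 h3 ZA'[OF a t] by linarith
    qed
    show ?thesis using 1 2 unfolding SR_def by simp
  qed
  have Zc0: "norm (Z (t + s) - Z t + s *\<^sub>R G (Z t)) \<le> K * s * s" if t: "t \<ge> 0" and s: "s \<ge> 0" for t s
  proof (rule le_lim_alpha[where D = "K * s + ct (t + s) + ct t + s * L * ct t"])
    fix \<alpha> :: real assume a: "0 < \<alpha>" "\<alpha> \<le> 1"
    have ts: "t + s \<ge> 0" using t s by simp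
    have id: "Z (t + s) - Z t + s *\<^sub>R G (Z t) = (Zf \<alpha> (t + s) - Zf \<alpha> t + s *\<^sub>R G (Zf \<alpha> t)) + (Z (t + s) - Zf \<alpha> (t + s))
       + (Zf \<alpha> t - Z t) + s *\<^sub>R (G (Z t) - G (Zf \<alpha> t))" by (simp add: algebra_simps)
    have h0: "norm (Z (t + s) - Z t + s *\<^sub>R G (Z t)) \<le> norm (Zf \<alpha> (t + s) - Zf \<alpha> t + s *\<^sub>R G (Zf \<alpha> t)) + norm (Z (t + s) - Zf \<alpha> (t + s))
       + norm (Zf \<alpha> t - Z t) + \<bar>s\<bar> * norm (G (Z t) - G (Zf \<alpha> t))" unfolding id by (rule tri4)
    have h1: "norm (Zf \<alpha> (t + s) - Zf \<alpha> t + s *\<^sub>R G (Zf \<alpha> t)) \<le> K * s * (s + \<alpha>)" by (rule Zcons[OF a t s])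
    have h2: "norm (Z (t + s) - Zf \<alpha> (t + s)) \<le> ct (t + s) * \<alpha>" by (rule ZA'[OF a ts])
    have h3: "norm (Zf \<alpha> t - Z t) \<le> ct t * \<alpha>" by (rule ZA[OF a t])
    have "norm (G (Z t) - G (Zf \<alpha> t)) \<le> L * norm (Z t - Zf \<alpha> t)" by (rule lipG[OF ZS[OF a t] ZSR[OF t]])
    also have "\<dots> \<le> L * (ct t * \<alpha>)" using ZA'[OF a t] L0 by (intro mult_left_mono) auto
    finally have "\<bar>s\<bar> * norm (G (Z t) - G (Zf \<alpha> t)) \<le> s * (L * (ct t * \<alpha>))" using s by (simp add: mult_left_mono)
    moreover have "K * s * (s + \<alpha>) = K * s * s + K * s * \<alpha>" by (simp add: algebra_simps)
    moreover have "s * (L * (ct t * \<alpha>)) = s * L * ct t * \<alpha>" by (simp add: algebra_simps)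
    moreover have "(K * s + ct (t + s) + ct t + s * L * ct t) * \<alpha> = K * s * \<alpha> + ct (t + s) * \<alpha> + ct t * \<alpha> + s * L * ct t * \<alpha>"
      by (simp add: algebra_simps)
    ultimately show "norm (Z (t + s) - Z t + s *\<^sub>R G (Z t)) \<le> K * s * s + (K * s + ct (t + s) + ct t + s * L * ct t) * \<alpha>"
      using h0 h1 h2 h3 by linarith
  qed
  have Zlip0: "norm (Z b - Z a) \<le> 2 * M * (b - a)" if ab: "0 \<le> a" "a \<le> b" for a b
  proof (rule le_lim_alpha[where D = "ct a + ct b"])
    fix \<alpha> :: real assume al: "0 < \<alpha>" "\<alpha> \<le> 1"
    have b0: "b \<ge> 0" using ab by simp
    have id: "Z b - Z a = (Zf \<alpha> b - Zf \<alpha> a) + (Z b - Zf \<alpha> b) + (Zf \<alpha> a - Z a) + 0 *\<^sub>R (0 :: (real^'r^'n) \<times> (real^'m^'r))"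
      by (simp add: algebra_simps)
    have h0: "norm (Z b - Z a) \<le> norm (Zf \<alpha> b - Zf \<alpha> a) + norm (Z b - Zf \<alpha> b) + norm (Zf \<alpha> a - Z a) + \<bar>0\<bar> * norm (0 :: (real^'r^'n) \<times> (real^'m^'r))"
      unfolding id by (rule tri4)
    have h1: "norm (Zf \<alpha> b - Zf \<alpha> a) \<le> 2 * M * (b - a)" by (rule Zlip[OF al(1) ab])
    have h2: "norm (Z b - Zf \<alpha> b) \<le> ct b * \<alpha>" by (rule ZA'[OF al b0])
    have h3: "norm (Zf \<alpha> a - Z a) \<le> ct a * \<alpha>" by (rule ZA[OF al ab(1)])
    have "(ct a + ct b) * \<alpha> = ct a * \<alpha> + ct b * \<alpha>" by (simp add: algebra_simps)
    then show "norm (Z b - Z a) \<le> 2 * M * (b - a) + (ct a + ct b) * \<alpha>" using h0 h1 h2 h3 by simp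
  qed
  define K' where "K' = K + 2 * L * M"
  have K'0: "K' \<ge> 0" unfolding K'_def using K0 L0 M0 by simp
  have quad: "norm (Z y - Z t + (y - t) *\<^sub>R G (Z t)) \<le> K' * (y - t)^2" if t: "t \<ge> 0" and y: "y \<ge> 0" for t y
  proof (cases "t \<le> y")
    case True
    have "norm (Z (t + (y - t)) - Z t + (y - t) *\<^sub>R G (Z t)) \<le> K * (y - t) * (y - t)"
      using Zc0[OF t, of "y - t"] True by simp
    also have "\<dots> \<le> K' * (y - t)^2"
    proof -
      have "0 \<le> 2 * L * M * (y - t)^2" using L0 M0 by simp
      moreover have "K' * (y - t)^2 = K * (y - t) * (y - t) + 2 * L * M * (y - t)^2"
        unfolding K'_def by (simp add: power2_eq_square algebra_simps)
      ultimately show ?thesis by linarith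
    qed
    finally show ?thesis by simp
  next
    case False
    define s where "s = t - y"
    have s: "s \<ge> 0" using False unfolding s_def by simp
    have h1: "norm (Z (y + s) - Z y + s *\<^sub>R G (Z y)) \<le> K * s * s" by (rule Zc0[OF y s])
    have ys: "y + s = t" unfolding s_def by simp
    have id: "Z y - Z t + (y - t) *\<^sub>R G (Z t) = - (Z (y + s) - Z y + s *\<^sub>R G (Z y)) + s *\<^sub>R (G (Z y) - G (Z t))"
      unfolding ys unfolding s_def by (simp add: algebra_simps)
    have "norm (Z y - Z t + (y - t) *\<^sub>R G (Z t)) \<le> norm (Z (y + s) - Z y + s *\<^sub>R G (Z y)) + norm (s *\<^sub>R (G (Z y) - G (Z t)))"
      unfolding id using norm_triangle_ineq[of "- (Z (y + s) - Z y + s *\<^sub>R G (Z y))" "s *\<^sub>R (G (Z y) - G (Z t))"]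
        norm_minus_cancel[of "Z (y + s) - Z y + s *\<^sub>R G (Z y)"] by linarith
    moreover have "norm (s *\<^sub>R (G (Z y) - G (Z t))) \<le> s * (L * (2 * M * s))"
    proof -
      have "norm (G (Z y) - G (Z t)) \<le> L * norm (Z y - Z t)" by (rule lipG[OF ZSR[OF t] ZSR[OF y]])
      also have "\<dots> \<le> L * (2 * M * s)"
        using Zlip0[OF y, of t] False L0 unfolding s_def by (intro mult_left_mono) (auto simp: norm_minus_commute)
      finally show ?thesis using s by (simp add: mult_left_mono)
    qed
    moreover have "K' * (y - t)^2 = K * s * s + s * (L * (2 * M * s))"
      unfolding K'_def s_def by (simp add: power2_eq_square algebra_simps)
    ultimately show ?thesis using h1 by linarith
  qed
  have der: "(Z has_vector_derivative - G (Z t)) (at t within {0..})" if t: "t \<ge> 0" for t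
    unfolding has_vector_derivative_def has_derivative_within_alt
  proof (intro conjI allI impI)
    show "bounded_linear (\<lambda>h. h *\<^sub>R - G (Z t))" by (rule bounded_linear_scaleR_left)
    fix e :: real assume e: "e > 0"
    show "\<exists>d>0. \<forall>y\<in>{0..}. norm (y - t) < d \<longrightarrow> norm (Z y - Z t - (y - t) *\<^sub>R - G (Z t)) \<le> e * norm (y - t)"
    proof (intro exI[of _ "e / (K' + 1)"] conjI ballI impI)
      show "e / (K' + 1) > 0" using e K'0 by simp
      fix y assume y: "y \<in> {0..}" "norm (y - t) < e / (K' + 1)"
      have "norm (Z y - Z t - (y - t) *\<^sub>R - G (Z t)) = norm (Z y - Z t + (y - t) *\<^sub>R G (Z t))" by simp
      also have "\<dots> \<le> K' * (y - t)^2" using quad[OF t] y by simp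
      also have "\<dots> \<le> e * norm (y - t)"
      proof -
        have a: "\<bar>y - t\<bar> * (K' + 1) \<le> e" using y(2) K'0 by (simp add: pos_less_divide_eq less_imp_le)
        have "K' * \<bar>y - t\<bar> \<le> e" using a K'0 by (simp add: algebra_simps)
        then have i: "(K' * \<bar>y - t\<bar>) * \<bar>y - t\<bar> \<le> e * \<bar>y - t\<bar>" by (rule mult_right_mono) simp
        have sq: "(y - t)^2 = \<bar>y - t\<bar> * \<bar>y - t\<bar>" by (simp add: power2_eq_square abs_mult_self_eq)
        have eq: "K' * (y - t)^2 = (K' * \<bar>y - t\<bar>) * \<bar>y - t\<bar>" unfolding sq by (simp add: mult.assoc)
        show ?thesis unfolding eq real_norm_def by (rule i)
      qed
      finally show "norm (Z y - Z t - (y - t) *\<^sub>R - G (Z t)) \<le> e * norm (y - t)" .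
    qed
  qed
  have ev: "eventually (\<lambda>\<alpha>. 0 < \<alpha> \<and> \<alpha> \<le> 1) (at_right (0::real))"
    unfolding eventually_at_right_field by (intro exI[of _ 1]) auto
  show ?thesis
  proof (intro exI[of _ "\<lambda>t. fst (Z t)"] exI[of _ "\<lambda>t. snd (Z t)"] conjI allI impI)
    show "fst (Z 0) = B0" "snd (Z 0) = A0" using Z0 by simp_all
  next
    fix t :: real assume t: "t \<ge> 0"
    have d: "(Z has_derivative (\<lambda>h. h *\<^sub>R - G (Z t))) (at t within {0..})"
      using der[OF t] by (simp add: has_vector_derivative_def)
    show "((\<lambda>t. fst (Z t)) has_vector_derivative - fst (G (fst (Z t), snd (Z t)))) (at t within {0..})"
      using has_derivative_fst[OF d] by (simp add: has_vector_derivative_def)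
    show "((\<lambda>t. snd (Z t)) has_vector_derivative - snd (G (fst (Z t), snd (Z t)))) (at t within {0..})"
      using has_derivative_snd[OF d] by (simp add: has_vector_derivative_def)
  next
    fix t :: real assume t: "t \<ge> 0"
    have "((\<lambda>\<alpha>. ct t * \<alpha>) \<longlongrightarrow> ct t * 0) (at_right (0::real))" by (intro tendsto_intros)
    then have lim0: "((\<lambda>\<alpha>. ct t * \<alpha>) \<longlongrightarrow> 0) (at_right (0::real))" by simp
    show "((\<lambda>\<alpha>. norm (lora_Y G lam k \<alpha> B0 A0 t - fst (Z t))) \<longlongrightarrow> 0) (at_right 0)"
    proof (rule Lim_null_comparison[OF _ lim0])
      show "eventually (\<lambda>\<alpha>. norm (norm (lora_Y G lam k \<alpha> B0 A0 t - fst (Z t))) \<le> ct t * \<alpha>) (at_right 0)"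
        using ev
      proof (rule eventually_mono)
        fix \<alpha> :: real assume a: "0 < \<alpha> \<and> \<alpha> \<le> 1"
        have "lora_Y G lam k \<alpha> B0 A0 t - fst (Z t) = fst (Zf \<alpha> t - Z t)" by (simp add: Zf_def)
        then have "norm (lora_Y G lam k \<alpha> B0 A0 t - fst (Z t)) \<le> norm (Zf \<alpha> t - Z t)" using norm_fst_le' by metis
        then show "norm (norm (lora_Y G lam k \<alpha> B0 A0 t - fst (Z t))) \<le> ct t * \<alpha>" using ZA[of \<alpha> t] a t by simp
      qed
    qed
    show "((\<lambda>\<alpha>. norm (lora_X G lam k \<alpha> B0 A0 t - snd (Z t))) \<longlongrightarrow> 0) (at_right 0)"
    proof (rule Lim_null_comparison[OF _ lim0])
      show "eventually (\<lambda>\<alpha>. norm (norm (lora_X G lam k \<alpha> B0 A0 t - snd (Z t))) \<le> ct t * \<alpha>) (at_right 0)"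
        using ev
      proof (rule eventually_mono)
        fix \<alpha> :: real assume a: "0 < \<alpha> \<and> \<alpha> \<le> 1"
        have "lora_X G lam k \<alpha> B0 A0 t - snd (Z t) = snd (Zf \<alpha> t - Z t)" by (simp add: Zf_def)
        then have "norm (lora_X G lam k \<alpha> B0 A0 t - snd (Z t)) \<le> norm (Zf \<alpha> t - Z t)" using norm_snd_le' by metis
        then show "norm (norm (lora_X G lam k \<alpha> B0 A0 t - snd (Z t))) \<le> ct t * \<alpha>" using ZA[of \<alpha> t] a t by simp
      qed
    qed
  qed
qed

end
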